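(* Let $p$ be a prime, $a\in\mathbb{Q}_p$, $a\ne0$, with $\sqrt{-a}\in\mathbb{Q}_p$, $A=|a|_p$, and $f(x)=\frac{ax}{x^2+a}$ on $\mathbb{Q}_p$. For every $r\in\{p^k:k\in\mathbb Z\}$ with $0<r<\sqrt A$, the measure-preserving dynamical system $(S_r(0),f,\mu)$ is not ergodic, where $\mu$ is the normalized Haar measure on $S_r(0)$.
   Context: $S_r(0)=\{x\in\mathbb{Q}_p:|x|_p=r\}$, equipped with the $\sigma$-algebra generated by its closed balls. The normalized Haar measure $\mu$ on $S_r(0)$ is the probability measure with $\mu(V_\rho(c))=\frac{p\rho}{r(p-1)}$ for every closed ball $V_\rho(c)=\{x:|x-c|_p\le\rho\}\subset S_r(0)$; $f$ maps $S_r(0)$ to itself and preserves $\mu$. A measure-preserving system is ergodic if every measurable set $V$ with $f^{-1}(V)=V$ (invariant set) has $\mu(V)\in\{0,1\}$. *)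

theory Defs
  imports "HOL-Probability.Probability" "HOL-Computational_Algebra.Primes"
begin

text \<open>The field of p-adic numbers, given as a field of characteristic 0 together with an
absolute value nrm characterising it as (an isomorphic copy of) the completion of the rationals
with respect to the p-adic absolute value: nrm is a non-archimedean absolute value that agrees
with the p-adic absolute value on the integers (hence on the rationals), the rationals are dense,
and the field is complete.  Such a structure is unique up to isometric isomorphism (it is Q_p).\<close>

definition padic_field :: "nat \<Rightarrow> ('a::field_char_0 \<Rightarrow> real) \<Rightarrow> bool" where
  "padic_field p nrm \<longleftrightarrow>
     (\<forall>x. nrm x \<ge> 0) \<and>
     (\<forall>x. nrm x = 0 \<longleftrightarrow> x = 0) \<and>
     (\<forall>x y. nrm (x * y) = nrm x * nrm y) \<and>
     (\<forall>x y. nrm (x + y) \<le> max (nrm x) (nrm y)) \<and>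
     (\<forall>n::int. n \<noteq> 0 \<longrightarrow>
        nrm (of_int n) = inverse (real p ^ multiplicity (int p) n)) \<and>
     (\<forall>x. \<forall>e>0. \<exists>q::rat. nrm (x - of_rat q) < e) \<and>
     (\<forall>X::nat \<Rightarrow> 'a. (\<forall>e>0. \<exists>N. \<forall>m\<ge>N. \<forall>n\<ge>N. nrm (X m - X n) < e) \<longrightarrow>
        (\<exists>L. (\<lambda>n. nrm (X n - L)) \<longlonglongrightarrow> 0))"

definition psphere :: "('a::field_char_0 \<Rightarrow> real) \<Rightarrow> real \<Rightarrow> 'a set" where
  "psphere nrm r = {x. nrm x = r}"

definition pcball :: "('a::field_char_0 \<Rightarrow> real) \<Rightarrow> real \<Rightarrow> 'a \<Rightarrow> 'a set" where
  "pcball nrm \<rho> c = {x. nrm (x - c) \<le> \<rho>}"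

definition pvalue :: "nat \<Rightarrow> real \<Rightarrow> bool" where
  "pvalue p \<rho> \<longleftrightarrow> (\<exists>k::int. \<rho> = real p powr real_of_int k)"

definition haar_sphere :: "nat \<Rightarrow> ('a::field_char_0 \<Rightarrow> real) \<Rightarrow> real \<Rightarrow> 'a measure \<Rightarrow> bool" where
  "haar_sphere p nrm r M \<longleftrightarrow>
     prob_space M \<and>
     space M = psphere nrm r \<and>
     sets M = sigma_sets (psphere nrm r)
        {pcball nrm \<rho> c | \<rho> c. pvalue p \<rho> \<and> pcball nrm \<rho> c \<subseteq> psphere nrm r} \<and>
     (\<forall>\<rho> c. pvalue p \<rho> \<and> pcball nrm \<rho> c \<subseteq> psphere nrm r \<longrightarrow>
        emeasure M (pcball nrm \<rho> c) = ennreal (real p * \<rho> / (r * (real p - 1))))"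

definition measure_preserving :: "'a measure \<Rightarrow> ('a \<Rightarrow> 'a) \<Rightarrow> bool" where
  "measure_preserving M f \<longleftrightarrow>
     f \<in> M \<rightarrow>\<^sub>M M \<and> (\<forall>A \<in> sets M. emeasure M (f -` A \<inter> space M) = emeasure M A)"

definition ergodic :: "'a measure \<Rightarrow> ('a \<Rightarrow> 'a) \<Rightarrow> bool" where
  "ergodic M f \<longleftrightarrow>
     (\<forall>V \<in> sets M. f -` V \<inter> space M = V \<longrightarrow> measure M V = 0 \<or> measure M V = 1)"

end

theory Submission
  imports Defs
begin


locale pctx =
  fixes p :: nat and nrm :: "'a::field_char_0 \<Rightarrow> real"
  assumes pf: "padic_field p nrm" and pr: "prime p"
begin

lemma pfd: "(\<forall>x. nrm x \<ge> 0) \<and>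
     (\<forall>x. nrm x = 0 \<longleftrightarrow> x = 0) \<and>
     (\<forall>x y. nrm (x * y) = nrm x * nrm y) \<and>
     (\<forall>x y. nrm (x + y) \<le> max (nrm x) (nrm y)) \<and>
     (\<forall>n::int. n \<noteq> 0 \<longrightarrow>
        nrm (of_int n) = inverse (real p ^ multiplicity (int p) n)) \<and>
     (\<forall>x. \<forall>e>0. \<exists>q::rat. nrm (x - of_rat q) < e)"
  using pf unfolding padic_field_def by (elim conjE) (intro conjI)

lemma nn: "nrm x \<ge> 0" using pfd by simp
lemma nz: "nrm x = 0 \<longleftrightarrow> x = 0" using pfd by simp
lemma nmult: "nrm (x * y) = nrm x * nrm y" using pfd by simp
lemma nultra: "nrm (x + y) \<le> max (nrm x) (nrm y)" using pfd by simp
lemma nint: "n \<noteq> 0 \<Longrightarrow> nrm (of_int n) = inverse (real p ^ multiplicity (int p) n)"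
  using pfd by simp
lemma ndense: "e > 0 \<Longrightarrow> \<exists>q::rat. nrm (x - of_rat q) < e"
  using pfd by simp

lemma p2: "real p \<ge> 2" using pr prime_ge_2_nat by auto

lemma none: "nrm 1 = 1"
proof -
  have "nrm 1 = nrm 1 * nrm 1" using nmult[of 1 1] by simp
  moreover have "nrm 1 \<noteq> 0" using nz by simp
  ultimately show ?thesis by simp
qed

lemma nminus: "nrm (- x) = nrm x"
proof -
  have "nrm (-1) * nrm (-1) = 1" using nmult[of "-1" "-1"] none by simp
  then have "nrm (-1) ^ 2 = 1 ^ 2" by (simp add: power2_eq_square)
  then have "nrm (-1) = 1" using nn[of "-1"] power2_eq_iff_nonneg[of "nrm (-1)" 1] by simp
  then show ?thesis using nmult[of "-1" x] by simp
qed

lemma ncomm: "nrm (x - y) = nrm (y - x)"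
  using nminus[of "x - y"] by simp

lemma npow: "nrm (x ^ n) = nrm x ^ n"
  by (induction n) (auto simp: none nmult)

lemma ndiv: "nrm (x / y) = nrm x / nrm y"
proof (cases "y = 0")
  case True then show ?thesis using nz[of 0] by simp
next
  case False
  have "nrm x = nrm (x / y) * nrm y" using nmult[of "x/y" y] False by simp
  moreover have "nrm y > 0" using False nz nn by (metis less_eq_real_def)
  ultimately show ?thesis by simp
qed

lemma nstrict: assumes "nrm u < nrm v" shows "nrm (u + v) = nrm v"
proof -
  have a: "nrm (u + v) \<le> nrm v" using nultra[of u v] assms by simp
  have "nrm v \<le> max (nrm (u + v)) (nrm (- u))" using nultra[of "u+v" "-u"] by simp
  then have "nrm v \<le> max (nrm (u + v)) (nrm u)" by (simp add: nminus)
  with a assms show ?thesis by linarith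
qed

lemma ntri: "nrm (x - z) \<le> max (nrm (x - y)) (nrm (y - z))"
  using nultra[of "x - y" "y - z"] by simp

lemma nsub: "nrm (x - y) \<le> max (nrm x) (nrm y)"
  using nultra[of x "-y"] nminus[of y] by simp

lemma value_group: assumes "x \<noteq> 0" shows "\<exists>j::int. nrm x = real p powr j"
proof -
  have px: "nrm x > 0" using assms nz nn by (metis less_eq_real_def)
  obtain q where q: "nrm (x - of_rat q) < nrm x" using ndense[OF px] by blast
  have "nrm (of_rat q) = nrm x"
    using nstrict[of "of_rat q - x" x] q ncomm by simp
  then have qn: "q \<noteq> 0" using px nz[of 0] by auto
  obtain m n where mn: "q = Fract m n" "n > 0" by (cases q) auto
  have m0: "m \<noteq> 0" using qn mn rat_number_collapse(1) by metis
  have "of_rat q = (of_int m / of_int n :: 'a)" using mn by (simp add: of_rat_rat)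
  then have "nrm x = nrm (of_int m) / nrm (of_int n)"
    using \<open>nrm (of_rat q) = nrm x\<close> ndiv by metis
  also have "\<dots> = inverse (real p ^ multiplicity (int p) m) / inverse (real p ^ multiplicity (int p) n)"
    using nint m0 mn by simp
  also have "\<dots> = real p powr (real (multiplicity (int p) n) - real (multiplicity (int p) m))"
    using p2 by (simp add: powr_diff powr_realpow divide_inverse mult.commute)
  finally show ?thesis
    by (metis of_int_diff of_int_of_nat_eq)
qed

end

locale pdyn = pctx +
  fixes a :: "'a::field_char_0" and r :: real
  assumes a0: "a \<noteq> 0" and r0: "r > 0" and key: "r^2 * (real p)^2 \<le> nrm a"
begin

definition f :: "'a \<Rightarrow> 'a" where "f x = a * x / (x ^ 2 + a)"
definition g :: "'a \<Rightarrow> 'a" where "g x = f x - x"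

lemma A_pos: "nrm a > 0" using a0 nz nn by (metis less_eq_real_def)

lemma r2A: "r^2 < nrm a"
proof -
  have "r^2 * 1 < r^2 * (real p)^2" using p2 r0 by (intro mult_strict_left_mono) (auto simp: power_less_one_iff)
  then show ?thesis using key by linarith
qed

lemma lam: "r^2 / nrm a \<le> 1 / 4"
proof -
  have "4 \<le> (real p)^2" using p2 mult_mono[of 2 "real p" 2 "real p"] by (simp add: power2_eq_square)
  then have "r^2 * 4 \<le> r^2 * (real p)^2" by (intro mult_left_mono) auto
  then show ?thesis using key A_pos by (simp add: field_simps)
qed

lemma lam1: "r^2 / nrm a < 1" using lam by linarith
lemma lam0: "0 \<le> r^2 / nrm a" using A_pos by simp

lemma den: assumes "nrm x = r" shows "nrm (x^2 + a) = nrm a" "x^2 + a \<noteq> 0"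
proof -
  have h: "nrm (x^2) < nrm a" using npow[of x 2] assms r2A by simp
  show "nrm (x^2 + a) = nrm a" using nstrict[OF h] .
  then show "x^2 + a \<noteq> 0"
  proof (intro notI)
    assume "x^2 + a = 0"
    then have "nrm (x^2 + a) = 0" using nz[of 0] by simp
    moreover assume "nrm (x^2 + a) = nrm a"
    ultimately show False using A_pos by simp
  qed
qed

lemma g_eq: assumes "nrm x = r" shows "g x = - (x^3) / (x^2 + a)"
proof -
  have d: "x^2 + a \<noteq> 0" using den(2)[OF assms] .
  have "a * x / (x^2 + a) - x = (a * x - x * (x^2 + a)) / (x^2 + a)"
    using d by (simp add: diff_divide_distrib)
  also have "a * x - x * (x^2 + a) = - (x^3)" by (simp add: algebra_simps power2_eq_square power3_eq_cube)
  finally show ?thesis unfolding g_def f_def .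
qed

lemma ng: assumes "nrm x = r" shows "nrm (g x) = r^3 / nrm a"
  using g_eq[OF assms] den[OF assms] by (simp add: ndiv nminus npow assms)

lemma ng_lt: assumes "nrm x = r" shows "nrm (g x) < r"
proof -
  have "r^3 / nrm a = r * (r^2 / nrm a)" by (simp add: power3_eq_cube power2_eq_square)
  also have "\<dots> < r * 1" using lam1 r0 by (intro mult_strict_left_mono) auto
  finally show ?thesis using ng[OF assms] by simp
qed

lemma ng_le: assumes "nrm x = r" shows "nrm (g x) \<le> r / (real p)^2"
proof -
  have "r^3 / nrm a = r * (r^2 / nrm a)" by (simp add: power3_eq_cube power2_eq_square)
  also have "r^2 / nrm a \<le> 1 / (real p)^2" using key A_pos p2 by (simp add: field_simps)
  then have "r * (r^2 / nrm a) \<le> r * (1 / (real p)^2)" using r0 by (intro mult_left_mono) auto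
  finally show ?thesis using ng[OF assms] by simp
qed

lemma g_diff: assumes "nrm x = r" "nrm y = r"
  shows "g x - g y = - ((x - y) * (x^2 * y^2 + a * (x^2 + x*y + y^2))) / ((x^2 + a) * (y^2 + a))"
proof -
  have "g x - g y = (- (x^3) * (y^2 + a) - - (y^3) * (x^2 + a)) / ((x^2 + a) * (y^2 + a))"
    unfolding g_eq[OF assms(1)] g_eq[OF assms(2)]
    using den(2)[OF assms(1)] den(2)[OF assms(2)] by (rule diff_frac_eq)
  also have "- (x^3) * (y^2 + a) - - (y^3) * (x^2 + a) = - ((x - y) * (x^2 * y^2 + a * (x^2 + x*y + y^2)))"
    by (simp add: algebra_simps power2_eq_square power3_eq_cube)
  finally show ?thesis .
qed

lemma g_lip: assumes "nrm x = r" "nrm y = r"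
  shows "nrm (g x - g y) \<le> (r^2 / nrm a) * nrm (x - y)"
proof -
  have n1: "nrm (x^2 + x*y + y^2) \<le> r^2"
  proof -
    have "nrm (x^2 + x*y + y^2) \<le> max (nrm (x^2 + x*y)) (nrm (y^2))" by (rule nultra)
    moreover have "nrm (x^2 + x*y) \<le> max (nrm (x^2)) (nrm (x*y))" by (rule nultra)
    ultimately show ?thesis using assms by (simp add: npow nmult power2_eq_square)
  qed
  have n2: "nrm (x^2 * y^2 + a * (x^2 + x*y + y^2)) \<le> nrm a * r^2"
  proof -
    have "nrm (x^2 * y^2 + a * (x^2 + x*y + y^2)) \<le> max (nrm (x^2*y^2)) (nrm (a * (x^2 + x*y + y^2)))" by (rule nultra)
    moreover have "nrm (x^2*y^2) \<le> nrm a * r^2" using assms r2A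
    proof -
      have "r^2 * r^2 \<le> nrm a * r^2" using r2A by (intro mult_right_mono) auto
      then show ?thesis using assms by (simp add: npow nmult power2_eq_square)
    qed
    moreover have "nrm (a * (x^2 + x*y + y^2)) \<le> nrm a * r^2" using n1 nn
      by (simp add: nmult mult_left_mono)
    ultimately show ?thesis by simp
  qed
  have "nrm (g x - g y) = nrm (x - y) * nrm (x^2 * y^2 + a * (x^2 + x*y + y^2)) / (nrm a * nrm a)"
    using den[OF assms(1)] den[OF assms(2)] by (simp add: g_diff[OF assms] ndiv nminus nmult)
  also have "\<dots> \<le> nrm (x - y) * (nrm a * r^2) / (nrm a * nrm a)"
    using n2 nn A_pos by (intro divide_right_mono mult_left_mono) auto
  also have "\<dots> = (r^2 / nrm a) * nrm (x - y)" using A_pos by (simp add: field_simps power2_eq_square)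
  finally show ?thesis .
qed

lemma f_eq: "f x = x + g x" unfolding g_def by simp

lemma nf: assumes "nrm x = r" shows "nrm (f x) = r"
  using nstrict[of "g x" x] ng_lt[OF assms] assms f_eq by (simp add: add.commute)

lemma f_iso: assumes "nrm x = r" "nrm y = r" shows "nrm (f x - f y) = nrm (x - y)"
proof (cases "x = y")
  case True then show ?thesis by simp
next
  case False
  then have pos: "nrm (x - y) > 0" using nz nn by (metis less_eq_real_def right_minus_eq)
  have "nrm (g x - g y) \<le> (r^2 / nrm a) * nrm (x - y)" by (rule g_lip[OF assms])
  also have "\<dots> < 1 * nrm (x - y)" using lam1 pos by (intro mult_strict_right_mono) auto
  finally have "nrm (g x - g y) < nrm (x - y)" by simp
  then have "nrm ((g x - g y) + (x - y)) = nrm (x - y)" by (rule nstrict)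
  moreover have "f x - f y = (g x - g y) + (x - y)" using f_eq by (simp add: algebra_simps)
  ultimately show ?thesis by simp
qed

lemma approx_surj: assumes c: "nrm c = r" and e: "e > 0"
  shows "\<exists>x. nrm x = r \<and> nrm (f x - c) \<le> e"
proof -
  define T where "T x = c - g x" for x
  define X where "X n = (T ^^ n) c" for n
  define l where "l = r^2 / nrm a"
  have l0: "l \<ge> 0" "l < 1" using lam0 lam1 unfolding l_def by auto
  have XS: "X (Suc n) = T (X n)" for n unfolding X_def by simp
  have inS: "nrm (X n) = r" for n
  proof (induction n)
    case 0 then show ?case using c by (simp add: X_def)
  next
    case (Suc n)
    have "nrm (- g (X n) + c) = nrm c" using ng_lt[OF Suc] c nminus by (intro nstrict) simp
    then show ?case using c by (simp add: XS T_def)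
  qed
  have step: "nrm (X (Suc n) - X n) \<le> l ^ n * r" for n
  proof (induction n)
    case 0
    have "nrm (g c) \<le> r" using ng_lt[OF c] by simp
    then show ?case by (simp add: X_def T_def nminus)
  next
    case (Suc n)
    have "X (Suc (Suc n)) - X (Suc n) = g (X n) - g (X (Suc n))" by (simp add: XS T_def)
    then have "nrm (X (Suc (Suc n)) - X (Suc n)) \<le> l * nrm (X n - X (Suc n))"
      using g_lip[OF inS inS] unfolding l_def by simp
    also have "\<dots> \<le> l * (l ^ n * r)" using Suc l0 ncomm by (intro mult_left_mono) auto
    finally show ?case by (simp add: mult.assoc)
  qed
  obtain n where n: "l ^ n < e / r" using real_arch_pow_inv[of "e / r" l] l0 e r0 by auto
  have "f (X n) - c = X n - X (Suc n)" by (simp add: f_eq XS T_def)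
  then have "nrm (f (X n) - c) \<le> l ^ n * r" using step ncomm by metis
  also have "\<dots> \<le> e" using n r0 by (simp add: field_simps)
  finally show ?thesis using inS by blast
qed

end


context pdyn begin

lemma ball_in: assumes "nrm c = r" "\<rho> < r" shows "pcball nrm \<rho> c \<subseteq> psphere nrm r"
proof
  fix y assume "y \<in> pcball nrm \<rho> c"
  then have "nrm (y - c) < nrm c" using assms by (simp add: pcball_def)
  then have "nrm ((y - c) + c) = nrm c" by (rule nstrict)
  then show "y \<in> psphere nrm r" using assms by (simp add: psphere_def)
qed

lemma ball_sub: assumes "pcball nrm \<rho> c \<subseteq> psphere nrm r" "\<rho> \<ge> 0"
  shows "nrm c = r" "\<rho> < r"
proof -
  have "c \<in> pcball nrm \<rho> c" using assms nz[of 0] by (simp add: pcball_def)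
  then show c: "nrm c = r" using assms by (auto simp: psphere_def)
  show "\<rho> < r"
  proof (rule ccontr)
    assume "\<not> \<rho> < r"
    then have "0 \<in> pcball nrm \<rho> c" using c by (simp add: pcball_def nminus)
    then show False using assms r0 nz[of 0] by (force simp: psphere_def)
  qed
qed

lemma pvalue_pos: "pvalue p \<rho> \<Longrightarrow> \<rho> > 0" using p2 by (auto simp: pvalue_def)

lemma preim: assumes "pcball nrm \<rho> c \<subseteq> psphere nrm r" "\<rho> > 0"
  shows "\<exists>x0. nrm x0 = r \<and> f -` pcball nrm \<rho> c \<inter> psphere nrm r = pcball nrm \<rho> x0"
proof -
  have c: "nrm c = r" and rr: "\<rho> < r" using ball_sub assms by auto
  obtain x0 where x0: "nrm x0 = r" "nrm (f x0 - c) \<le> \<rho>" using approx_surj[OF c assms(2)] by blast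
  have "f -` pcball nrm \<rho> c \<inter> psphere nrm r = pcball nrm \<rho> x0"
  proof (intro equalityI subsetI)
    fix x assume x: "x \<in> f -` pcball nrm \<rho> c \<inter> psphere nrm r"
    then have xr: "nrm x = r" and fx: "nrm (f x - c) \<le> \<rho>" by (auto simp: psphere_def pcball_def)
    have "nrm (x - x0) = nrm (f x - f x0)" using f_iso[OF xr x0(1)] by simp
    also have "\<dots> \<le> max (nrm (f x - c)) (nrm (c - f x0))" by (rule ntri)
    also have "\<dots> \<le> \<rho>" using fx x0 ncomm by simp
    finally show "x \<in> pcball nrm \<rho> x0" by (simp add: pcball_def)
  next
    fix x assume x: "x \<in> pcball nrm \<rho> x0"
    then have xr: "nrm x = r" using ball_in[OF x0(1) rr] by (auto simp: psphere_def)
    have "nrm (f x - c) \<le> max (nrm (f x - f x0)) (nrm (f x0 - c))" by (rule ntri)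
    also have "\<dots> \<le> \<rho>" using f_iso[OF xr x0(1)] x x0 by (simp add: pcball_def)
    finally show "x \<in> f -` pcball nrm \<rho> c \<inter> psphere nrm r" using xr by (simp add: pcball_def psphere_def)
  qed
  with x0 show ?thesis by blast
qed

lemma ball_int: assumes "\<rho>1 \<le> \<rho>2" shows "pcball nrm \<rho>1 c1 \<inter> pcball nrm \<rho>2 c2 = {} \<or>
   pcball nrm \<rho>1 c1 \<inter> pcball nrm \<rho>2 c2 = pcball nrm \<rho>1 c1"
proof (cases "pcball nrm \<rho>1 c1 \<inter> pcball nrm \<rho>2 c2 = {}")
  case False
  then obtain z where z: "nrm (z - c1) \<le> \<rho>1" "nrm (z - c2) \<le> \<rho>2" by (auto simp: pcball_def)
  have "pcball nrm \<rho>1 c1 \<subseteq> pcball nrm \<rho>2 c2"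
  proof
    fix y assume "y \<in> pcball nrm \<rho>1 c1"
    then have y: "nrm (y - c1) \<le> \<rho>1" by (simp add: pcball_def)
    have "nrm (y - c2) \<le> max (nrm (y - c1)) (nrm (c1 - c2))" by (rule ntri)
    moreover have "nrm (c1 - c2) \<le> max (nrm (c1 - z)) (nrm (z - c2))" by (rule ntri)
    ultimately show "y \<in> pcball nrm \<rho>2 c2" using y z assms ncomm[of c1 z]
      by (simp add: pcball_def)
  qed
  then show ?thesis by blast
next
  case True then show ?thesis by blast
qed

lemma invariant: assumes "nrm c = r"
  shows "f -` pcball nrm (r / (real p)^2) c \<inter> psphere nrm r = pcball nrm (r / (real p)^2) c"
proof -
  let ?\<rho> = "r / (real p)^2"
  have rr: "?\<rho> < r" using p2 r0 by (simp add: field_simps)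
  show ?thesis
  proof (intro equalityI subsetI)
    fix x assume x: "x \<in> f -` pcball nrm ?\<rho> c \<inter> psphere nrm r"
    then have xr: "nrm x = r" and fx: "nrm (f x - c) \<le> ?\<rho>" by (auto simp: psphere_def pcball_def)
    have "nrm (x - c) \<le> max (nrm (x - f x)) (nrm (f x - c))" by (rule ntri)
    moreover have "nrm (x - f x) = nrm (g x)" by (simp add: f_eq nminus)
    ultimately show "x \<in> pcball nrm ?\<rho> c" using ng_le[OF xr] fx by (simp add: pcball_def)
  next
    fix x assume x: "x \<in> pcball nrm ?\<rho> c"
    then have xr: "nrm x = r" using ball_in[OF assms rr] by (auto simp: psphere_def)
    have "nrm (f x - c) \<le> max (nrm (f x - x)) (nrm (x - c))" by (rule ntri)
    moreover have "nrm (f x - x) = nrm (g x)" by (simp add: f_eq)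
    ultimately show "x \<in> f -` pcball nrm ?\<rho> c \<inter> psphere nrm r" using ng_le[OF xr] x xr
      by (simp add: pcball_def psphere_def)
  qed
qed

end


theorem theorem3p5:
  fixes p :: nat and nrm :: "'a::field_char_0 \<Rightarrow> real" and a :: 'a
    and r :: real and M :: "'a measure"
  assumes "prime p"
    and "padic_field p nrm"
    and "a \<noteq> 0"
    and "\<exists>b. b * b = - a"
    and "pvalue p r"
    and "0 < r" and "r < sqrt (nrm a)"
    and "haar_sphere p nrm r M"
  shows "measure_preserving M (\<lambda>x. a * x / (x ^ 2 + a))
         \<and> \<not> ergodic M (\<lambda>x. a * x / (x ^ 2 + a))"
proof -
  interpret pctx p nrm using assms(1,2) by unfold_locales
  obtain b where b: "b * b = - a" using assms(4) by blast
  have b0: "b \<noteq> 0" using b assms(3) by auto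
  have Ab: "nrm a = nrm b ^ 2" using nmult[of b b] b nminus[of a] by (simp add: power2_eq_square)
  have sq: "sqrt (nrm a) = nrm b" using Ab nn[of b] by simp
  obtain j :: int where j: "nrm b = real p powr j" using value_group[OF b0] by blast
  obtain k :: int where k: "r = real p powr k" using assms(5) unfolding pvalue_def by blast
  have p1: "real p > 1" using p2 by simp
  have "k < j" using assms(7) sq j k p1 by simp
  then have "real p powr (k + 1) \<le> real p powr j" using p1 by simp
  then have rp: "r * real p \<le> nrm b" using j k p1 by (simp add: powr_add)
  have key: "r^2 * (real p)^2 \<le> nrm a"
  proof -
    have "(r * real p)^2 \<le> (nrm b)^2" using rp assms(6) p1 by (intro power_mono) auto
    then show ?thesis using Ab by (simp add: power_mult_distrib)
  qed
  interpret pdyn p nrm a r using assms(3,6) key by unfold_locales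
  have fe: "(\<lambda>x. a * x / (x ^ 2 + a)) = f" by (simp add: fun_eq_iff f_def)
  define \<Omega> where "\<Omega> = psphere nrm r"
  define G where "G = {pcball nrm \<rho> c | \<rho> c. pvalue p \<rho> \<and> pcball nrm \<rho> c \<subseteq> psphere nrm r}"
  have M: "prob_space M" "space M = \<Omega>" "sets M = sigma_sets \<Omega> G"
    and Mb: "\<And>\<rho> c. pvalue p \<rho> \<Longrightarrow> pcball nrm \<rho> c \<subseteq> \<Omega> \<Longrightarrow>
        emeasure M (pcball nrm \<rho> c) = ennreal (real p * \<rho> / (r * (real p - 1)))"
    using assms(8) unfolding haar_sphere_def \<Omega>_def G_def by auto
  interpret P: prob_space M by (rule M(1))
  have GI: "pcball nrm \<rho> c \<in> G" if "pvalue p \<rho>" "pcball nrm \<rho> c \<subseteq> \<Omega>" for \<rho> c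
    using that unfolding G_def \<Omega>_def by blast
  have Gform: "\<exists>\<rho> c. X = pcball nrm \<rho> c \<and> pvalue p \<rho> \<and> pcball nrm \<rho> c \<subseteq> \<Omega>" if "X \<in> G" for X
    using that unfolding G_def \<Omega>_def by blast
  have GP: "G \<subseteq> Pow \<Omega>" using Gform by blast
  have GM: "G \<subseteq> sets M" using M(3) by auto
  have fO: "f x \<in> \<Omega>" if "x \<in> \<Omega>" for x using nf that by (simp add: \<Omega>_def psphere_def)
  have pre: "\<exists>x0. f -` B \<inter> \<Omega> = pcball nrm \<rho> x0 \<and> pcball nrm \<rho> x0 \<in> G \<and>
      emeasure M (pcball nrm \<rho> x0) = emeasure M B"
    if B: "B = pcball nrm \<rho> c" "pvalue p \<rho>" "pcball nrm \<rho> c \<subseteq> \<Omega>" for B \<rho> c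
  proof -
    have \<rho>0: "\<rho> > 0" using pvalue_pos B by auto
    obtain x0 where x0: "nrm x0 = r" "f -` pcball nrm \<rho> c \<inter> psphere nrm r = pcball nrm \<rho> x0"
      using preim[OF _ \<rho>0] B \<Omega>_def by blast
    have rr: "\<rho> < r" using ball_sub[of \<rho> c] B \<rho>0 \<Omega>_def by auto
    have sub: "pcball nrm \<rho> x0 \<subseteq> \<Omega>" using ball_in[OF x0(1) rr] \<Omega>_def by simp
    have "pcball nrm \<rho> x0 \<in> G" using GI[OF B(2) sub] .
    moreover have "emeasure M (pcball nrm \<rho> x0) = emeasure M B" using Mb[OF B(2) sub] Mb[OF B(2) B(3)] B(1) by simp
    ultimately show ?thesis using x0 B(1) \<Omega>_def by auto
  qed
  have meas: "f \<in> M \<rightarrow>\<^sub>M M"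
  proof (rule measurable_sigma_sets[OF M(3) GP])
    show "f \<in> space M \<rightarrow> \<Omega>" using fO M(2) by auto
    fix y assume "y \<in> G"
    then obtain \<rho> c where "y = pcball nrm \<rho> c" "pvalue p \<rho>" "pcball nrm \<rho> c \<subseteq> \<Omega>"
      using Gform[OF \<open>y \<in> G\<close>] by blast
    then show "f -` y \<inter> space M \<in> sets M" using pre[of y \<rho> c] GM M(2) by auto
  qed
  define E where "E = insert \<Omega> (insert {} G)"
  have SE: "sigma_sets \<Omega> E = sigma_sets \<Omega> G"
  proof
    show "sigma_sets \<Omega> E \<subseteq> sigma_sets \<Omega> G"
      by (rule sigma_sets_mono) (auto simp: E_def sigma_sets_top intro: sigma_sets.Empty)
    show "sigma_sets \<Omega> G \<subseteq> sigma_sets \<Omega> E" by (rule sigma_sets_subseteq) (auto simp: E_def)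
  qed
  define N where "N = distr M M f"
  have SN: "sets N = sets M" unfolding N_def by simp
  have eN: "emeasure N A = emeasure M (f -` A \<inter> space M)" if "A \<in> sets M" for A
    unfolding N_def using emeasure_distr[OF meas] that by simp
  have "M = N"
  proof (rule measure_eqI_generator_eq[where E = E and \<Omega> = \<Omega> and A = "\<lambda>_. \<Omega>"])
    show "Int_stable E"
      unfolding Int_stable_def
    proof (intro ballI)
      fix X Y assume X: "X \<in> E" and Y: "Y \<in> E"
      show "X \<inter> Y \<in> E"
      proof (cases "X \<in> G \<and> Y \<in> G")
        case True
        obtain \<rho>1 c1 where X1: "X = pcball nrm \<rho>1 c1" using Gform True by blast
        obtain \<rho>2 c2 where Y1: "Y = pcball nrm \<rho>2 c2" using Gform True by blast
        note XY = X1 Y1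
        show ?thesis
        proof (cases "\<rho>1 \<le> \<rho>2")
          case True
          have "X \<inter> Y = {} \<or> X \<inter> Y = X" using ball_int[OF True, of c1 c2] XY by simp
          moreover have "{} \<in> E" unfolding E_def by simp
          ultimately show ?thesis using X by metis
        next
          case False
          then have "\<rho>2 \<le> \<rho>1" by simp
          have "Y \<inter> X = {} \<or> Y \<inter> X = Y" using ball_int[OF \<open>\<rho>2 \<le> \<rho>1\<close>, of c2 c1] XY by simp
          moreover have "{} \<in> E" unfolding E_def by simp
          ultimately show ?thesis using Y by (metis Int_commute)
        qed
      next
        case False
        have XO: "X \<subseteq> \<Omega>" "Y \<subseteq> \<Omega>" using X Y GP unfolding E_def by auto
        from False X Y have "X = \<Omega> \<or> X = {} \<or> Y = \<Omega> \<or> Y = {}" unfolding E_def by blast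
        then show ?thesis using X Y XO unfolding E_def by (metis Int_absorb1 Int_absorb2 Int_empty_left Int_empty_right)
      qed
    qed
    show "E \<subseteq> Pow \<Omega>" using GP by (auto simp: E_def)
    show "sets M = sigma_sets \<Omega> E" using M(3) SE by simp
    show "sets N = sigma_sets \<Omega> E" using SN M(3) SE by simp
    show "range (\<lambda>_. \<Omega>) \<subseteq> E" by (auto simp: E_def)
    show "(\<Union>i. \<Omega>) = \<Omega>" by simp
    show "\<And>i. emeasure M \<Omega> \<noteq> \<infinity>" using P.emeasure_space_1 M(2) by simp
    fix X assume X: "X \<in> E"
    show "emeasure M X = emeasure N X"
    proof -
      have XM: "X \<in> sets M" using X GM M(3) sigma_sets_top unfolding E_def by auto
      have "emeasure N X = emeasure M (f -` X \<inter> \<Omega>)" using eN[OF XM] M(2) by simp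
      moreover have "emeasure M (f -` X \<inter> \<Omega>) = emeasure M X"
      proof -
        consider "X = \<Omega>" | "X = {}" | "X \<in> G" using X unfolding E_def by blast
        then show ?thesis
        proof cases
          case 1 then have "f -` X \<inter> \<Omega> = \<Omega>" using fO by auto
          then show ?thesis using 1 by simp
        next
          case 2 then show ?thesis by simp
        next
          case 3
          then obtain \<rho> c where "X = pcball nrm \<rho> c" "pvalue p \<rho>" "pcball nrm \<rho> c \<subseteq> \<Omega>"
            using Gform[OF 3] by blast
          then show ?thesis using pre[of X \<rho> c] by auto
        qed
      qed
      ultimately show ?thesis by simp
    qed
  qed
  have mp: "measure_preserving M f"
    unfolding measure_preserving_def
  proof (intro conjI ballI meas)
    fix A assume A: "A \<in> sets M"
    have "emeasure M (f -` A \<inter> space M) = emeasure N A" using eN[OF A] by simp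
    also have "\<dots> = emeasure M A" using \<open>M = N\<close> by simp
    finally show "emeasure M (f -` A \<inter> space M) = emeasure M A" .
  qed
  have ne: "\<not> ergodic M f"
  proof -
    obtain x1 where x1: "x1 \<in> space M" using P.not_empty by blast
    then have x1r: "nrm x1 = r" using M(2) by (simp add: \<Omega>_def psphere_def)
    define \<rho> where "\<rho> = r / (real p)^2"
    have pv: "pvalue p \<rho>" unfolding pvalue_def \<rho>_def k using p1
      by (intro exI[of _ "k - 2"]) (simp add: powr_diff powr_realpow)
    have rr: "\<rho> < r" unfolding \<rho>_def using p2 r0 by (simp add: field_simps)
    have sub: "pcball nrm \<rho> x1 \<subseteq> \<Omega>" using ball_in[OF x1r rr] \<Omega>_def by simp
    have VG: "pcball nrm \<rho> x1 \<in> sets M" using GI[OF pv sub] GM by blast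
    have inv: "f -` pcball nrm \<rho> x1 \<inter> space M = pcball nrm \<rho> x1"
      using invariant[OF x1r] M(2) \<Omega>_def \<rho>_def by simp
    have val: "real p * \<rho> / (r * (real p - 1)) = 1 / (real p * (real p - 1))"
      unfolding \<rho>_def using r0 p2 by (simp add: field_simps power2_eq_square)
    have v1: "1 / (real p * (real p - 1)) > 0" using p2 by simp
    have "real p * (real p - 1) \<ge> 2 * 1" using p2 by (intro mult_mono) auto
    then have v2: "1 / (real p * (real p - 1)) < 1" by simp
    have "measure M (pcball nrm \<rho> x1) = 1 / (real p * (real p - 1))"
      unfolding measure_def using Mb[OF pv sub] val v1 by simp
    then show ?thesis unfolding ergodic_def using VG inv v1 v2 by force
  qed
  show ?thesis using mp ne fe by simp
qed


end
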